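(* Let $A:[1,\infty)\to\mathbb R^{d\times d}$ be continuous with evolution family $T(t,s)$ for $x'=A(t)x$, and let $\|\cdot\|$ be a norm on $\mathbb R^d$. The following are equivalent: (1) $x'=A(t)x$ admits a nonuniform strong polynomial dichotomy; (2) there is a family of norms $\mathcal S=\{\|\cdot\|_t;\ t\ge1\}$ on $\mathbb R^d$ such that $x'=A(t)x$ admits a strong polynomial dichotomy with respect to $\mathcal S$ and there exist $C>0$, $\delta\ge0$ with $\|x\|\le\|x\|_t\le Ct^\delta\|x\|$ for all $x\in\mathbb R^d$, $t\ge1$.
   Context: Nonuniform strong polynomial dichotomy: there exist $K>0$, $a\ge\lambda>0$, $\varepsilon\ge0$ and projections $P(t)$, $t\ge1$, with $P(t)T(t,s)=T(t,s)P(s)$ for $t\ge s\ge1$ and, for $t\ge s\ge1$, $Q(t)=\mathrm{Id}-P(t)$: $\|T(t,s)P(s)\|\le K(t/s)^{-\lambda}s^\varepsilon$, $\|T(s,t)Q(t)\|\le K(t/s)^{-\lambda}t^\varepsilon$, $\|T(t,s)\|\le K(t/s)^as^\varepsilon$, $\|T(s,t)\|\le K(t/s)^at^\varepsilon$. Strong polynomial dichotomy w.r.t. $\{\|\cdot\|_t\}$: there exist $K>0$, $a\ge\lambda>0$ and projections $P(t)$ with $P(t)T(t,s)=T(t,s)P(s)$ and, for $t\ge s\ge1$, $x\in\mathbb R^d$: $\|T(t,s)P(s)x\|_t\le K(t/s)^{-\lambda}\|x\|_s$, $\|T(s,t)Q(t)x\|_s\le K(t/s)^{-\lambda}\|x\|_t$,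 $\|T(t,s)x\|_t\le K(t/s)^a\|x\|_s$, $\|T(s,t)x\|_s\le K(t/s)^a\|x\|_t$. *)

theory Defs
  imports "HOL-Analysis.Analysis"
begin

definition is_norm :: "(real ^ 'd \<Rightarrow> real) \<Rightarrow> bool" where
  "is_norm N \<longleftrightarrow> (\<forall>x. 0 \<le> N x) \<and> (\<forall>x. N x = 0 \<longleftrightarrow> x = 0)
     \<and> (\<forall>c x. N (c *\<^sub>R x) = \<bar>c\<bar> * N x) \<and> (\<forall>x y. N (x + y) \<le> N x + N y)"

definition op_norm :: "(real ^ 'd \<Rightarrow> real) \<Rightarrow> real ^ 'd ^ 'd \<Rightarrow> real" where
  "op_norm N M = Sup ((\<lambda>x. N (M *v x)) ` {x. N x \<le> 1})"

definition evolution_family ::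
  "(real \<Rightarrow> real ^ 'd ^ 'd) \<Rightarrow> (real \<Rightarrow> real \<Rightarrow> real ^ 'd ^ 'd) \<Rightarrow> bool" where
  "evolution_family A T \<longleftrightarrow>
     (\<forall>s\<ge>1. T s s = mat 1 \<and>
        (\<forall>t\<ge>1. ((\<lambda>\<tau>. T \<tau> s) has_vector_derivative (A t ** T t s)) (at t within {1..})))"

definition nonuniform_strong_poly_dichotomy ::
  "(real ^ 'd \<Rightarrow> real) \<Rightarrow> (real \<Rightarrow> real \<Rightarrow> real ^ 'd ^ 'd) \<Rightarrow> bool" where
  "nonuniform_strong_poly_dichotomy N T \<longleftrightarrow>
    (\<exists>K a lam \<epsilon> P. K > 0 \<and> a \<ge> lam \<and> lam > 0 \<and> \<epsilon> \<ge> 0 \<and>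
      (\<forall>t\<ge>1. P t ** P t = P t) \<and>
      (\<forall>t s. 1 \<le> s \<and> s \<le> t \<longrightarrow>
         P t ** T t s = T t s ** P s \<and>
         op_norm N (T t s ** P s) \<le> K * (t / s) powr (- lam) * s powr \<epsilon> \<and>
         op_norm N (T s t ** (mat 1 - P t)) \<le> K * (t / s) powr (- lam) * t powr \<epsilon> \<and>
         op_norm N (T t s) \<le> K * (t / s) powr a * s powr \<epsilon> \<and>
         op_norm N (T s t) \<le> K * (t / s) powr a * t powr \<epsilon>))"

definition strong_poly_dichotomy_wrt ::
  "(real \<Rightarrow> real ^ 'd \<Rightarrow> real) \<Rightarrow> (real \<Rightarrow> real \<Rightarrow> real ^ 'd ^ 'd) \<Rightarrow> bool" where
  "strong_poly_dichotomy_wrt S T \<longleftrightarrow>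
    (\<exists>K a lam P. K > 0 \<and> a \<ge> lam \<and> lam > 0 \<and>
      (\<forall>t\<ge>1. P t ** P t = P t) \<and>
      (\<forall>t s. 1 \<le> s \<and> s \<le> t \<longrightarrow>
         P t ** T t s = T t s ** P s \<and>
         (\<forall>x. S t (T t s ** P s *v x) \<le> K * (t / s) powr (- lam) * S s x) \<and>
         (\<forall>x. S s (T s t ** (mat 1 - P t) *v x) \<le> K * (t / s) powr (- lam) * S t x) \<and>
         (\<forall>x. S t (T t s *v x) \<le> K * (t / s) powr a * S s x) \<and>
         (\<forall>x. S s (T s t *v x) \<le> K * (t / s) powr a * S t x)))"

end

theory Submission
  imports Defs
begin


lemma isn:
  assumes "is_norm N"
  shows "N x \<ge> 0" "N 0 = 0" "N (c *\<^sub>R x) = \<bar>c\<bar> * N x" "N (x + y) \<le> N x + N y"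
    "N x = 0 \<longleftrightarrow> x = 0"
  using assms unfolding is_norm_def by auto

lemma isn_sum:
  assumes "is_norm N" "finite I"
  shows "N (\<Sum>i\<in>I. f i) \<le> (\<Sum>i\<in>I. N (f i))"
  using assms(2)
proof (induction I rule: finite_induct)
  case empty then show ?case using isn(2)[OF assms(1)] by simp
next
  case (insert i I)
  then show ?case using isn(4)[OF assms(1), of "f i" "sum f I"] by simp
qed

lemma isn_upper:
  fixes N :: "real ^ 'd \<Rightarrow> real"
  assumes "is_norm N"
  shows "\<exists>B\<ge>0. \<forall>x. N x \<le> B * norm x"
proof -
  define B where "B = (\<Sum>i\<in>UNIV. N (axis i (1::real) :: real ^ 'd))"
  have B0: "B \<ge> 0" unfolding B_def by (intro sum_nonneg) (simp add: isn[OF assms])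
  have "N x \<le> B * norm x" for x :: "real ^ 'd"
  proof -
    have "x = (\<Sum>i\<in>UNIV. (x$i) *\<^sub>R axis i (1::real))"
      using basis_expansion[of x] by (simp add: scalar_mult_eq_scaleR)
    then have "N x = N (\<Sum>i\<in>UNIV. (x$i) *\<^sub>R axis i (1::real))" by simp
    also have "\<dots> \<le> (\<Sum>i\<in>UNIV. N ((x$i) *\<^sub>R axis i (1::real)))"
      by (rule isn_sum[OF assms]) simp
    also have "\<dots> = (\<Sum>i\<in>UNIV. \<bar>x$i\<bar> * N (axis i (1::real)))"
      by (simp add: isn[OF assms])
    also have "\<dots> \<le> (\<Sum>i\<in>UNIV. norm x * N (axis i (1::real)))"
      by (intro sum_mono mult_right_mono) (auto simp: component_le_norm_cart isn[OF assms])
    also have "\<dots> = B * norm x" by (simp add: B_def sum_distrib_left mult.commute)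
    finally show ?thesis .
  qed
  with B0 show ?thesis by blast
qed

lemma isn_lower:
  fixes N :: "real ^ 'd \<Rightarrow> real"
  assumes "is_norm N"
  shows "\<exists>c>0. \<forall>x. c * norm x \<le> N x"
proof -
  obtain B where B: "B \<ge> 0" "\<And>x. N x \<le> B * norm x" using isn_upper[OF assms] by blast
  have lip: "\<bar>N x - N y\<bar> \<le> B * norm (x - y)" for x y
  proof -
    have "N x \<le> N y + N (x - y)" using isn(4)[OF assms, of y "x - y"] by simp
    moreover have "N y \<le> N x + N (y - x)" using isn(4)[OF assms, of x "y - x"] by simp
    moreover have "N (y - x) = N (x - y)"
      using isn(3)[OF assms, of "-1" "x - y"] by simp
    ultimately show ?thesis using B(2)[of "x - y"] by auto
  qed
  have cont: "continuous_on UNIV N"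
    unfolding continuous_on_iff
  proof (intro ballI allI impI)
    fix x :: "real ^ 'd" and e :: real assume "e > 0"
    show "\<exists>d>0. \<forall>x'\<in>UNIV. dist x' x < d \<longrightarrow> dist (N x') (N x) < e"
    proof (intro exI[of _ "e / (B + 1)"] conjI ballI impI)
      show "e / (B + 1) > 0" using \<open>e > 0\<close> B by simp
      fix x' assume "dist x' x < e / (B + 1)"
      then have "(B + 1) * norm (x' - x) < e" using B by (simp add: dist_norm field_simps)
      moreover have "B * norm (x' - x) \<le> (B + 1) * norm (x' - x)" by (simp add: mult_right_mono)
      ultimately show "dist (N x') (N x) < e" using lip[of x' x] by (simp add: dist_real_def)
    qed
  qed
  obtain x0 where x0: "x0 \<in> sphere 0 1" "\<And>y. y \<in> sphere (0::real^'d) 1 \<Longrightarrow> N x0 \<le> N y"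
  proof -
    have "sphere (0::real^'d) 1 \<noteq> {}"
    proof -
      have "axis (undefined::'d) (1::real) \<in> sphere 0 1" by simp
      then show ?thesis by blast
    qed
    moreover have "compact (sphere (0::real^'d) 1)" by simp
    moreover have "continuous_on (sphere (0::real^'d) 1) N" by (rule continuous_on_subset[OF cont]) simp
    ultimately obtain z where "z \<in> sphere (0::real^'d) 1" "\<forall>y\<in>sphere 0 1. N z \<le> N y"
      using continuous_attains_inf by metis
    then show ?thesis using that by blast
  qed
  have "x0 \<noteq> 0" using x0(1) by auto
  then have c0: "N x0 > 0" using isn(1,5)[OF assms, of x0] by auto
  have "N x0 * norm x \<le> N x" for x
  proof (cases "x = 0")
    case True then show ?thesis by (simp add: isn[OF assms])
  next
    case False
    then have "(1 / norm x) *\<^sub>R x \<in> sphere 0 1" by simp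
    then have "N x0 \<le> N ((1 / norm x) *\<^sub>R x)" by (rule x0(2))
    also have "\<dots> = N x / norm x" by (simp add: isn[OF assms])
    finally show ?thesis using False by (simp add: field_simps)
  qed
  with c0 show ?thesis by blast
qed

lemma op_norm_pt:
  fixes N :: "real ^ 'd \<Rightarrow> real" and M :: "real ^ 'd ^ 'd"
  assumes "is_norm N"
  shows "N (M *v x) \<le> op_norm N M * N x"
proof -
  obtain c where c: "c > 0" "\<And>x. c * norm x \<le> N x" using isn_lower[OF assms] by blast
  obtain B where B: "B \<ge> 0" "\<And>x. N x \<le> B * norm x" using isn_upper[OF assms] by blast
  obtain L where L: "\<And>x. norm (M *v x) \<le> norm x * L"
    using bounded_linear.bounded[OF matrix_vector_mul_bounded_linear[of M]] by blast
  have bdd: "bdd_above ((\<lambda>x. N (M *v x)) ` {x. N x \<le> 1})"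
  proof -
   have "N (M *v y) \<le> B * ((1 / c) * \<bar>L\<bar>)" if "y \<in> {x. N x \<le> 1}" for y
   proof -
    from that have "N y \<le> 1" by simp
    have "norm y \<le> 1 / c" using c(2)[of y] \<open>N y \<le> 1\<close> c(1) by (simp add: field_simps)
    have "N (M *v y) \<le> B * (norm y * L)" using B(2)[of "M *v y"] L[of y] B(1)
      by (meson mult_left_mono order_trans)
    also have "\<dots> \<le> B * ((1 / c) * \<bar>L\<bar>)"
    proof (intro mult_left_mono B(1))
      have "norm y * L \<le> norm y * \<bar>L\<bar>" by (simp add: mult_left_mono)
      also have "\<dots> \<le> (1 / c) * \<bar>L\<bar>" using mult_right_mono[OF \<open>norm y \<le> 1 / c\<close> abs_ge_zero[of L]] by simp
      finally show "norm y * L \<le> (1 / c) * \<bar>L\<bar>" .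
    qed
    finally show "N (M *v y) \<le> B * ((1 / c) * \<bar>L\<bar>)" .
   qed
   then show ?thesis unfolding bdd_above_def by blast
  qed
  show ?thesis
  proof (cases "x = 0")
    case True then show ?thesis by (simp add: isn[OF assms])
  next
    case False
    then have Nx: "N x > 0" using isn(1,5)[OF assms, of x] by auto
    let ?y = "(1 / N x) *\<^sub>R x"
    have "N ?y = 1" using Nx False by (simp add: isn[OF assms])
    then have "N (M *v ?y) \<le> op_norm N M" unfolding op_norm_def
      by (intro cSup_upper[OF _ bdd]) auto
    moreover have "N (M *v ?y) = N (M *v x) / N x"
      using Nx by (simp add: matrix_vector_mult_scaleR isn[OF assms])
    ultimately show ?thesis using Nx by (simp add: field_simps)
  qed
qed



lemma ode_unique:
  fixes A :: "real \<Rightarrow> real^'d^'d" and X :: "real \<Rightarrow> real^'d"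
  assumes contA: "continuous_on {1..} A"
    and der: "\<And>u. u \<ge> 1 \<Longrightarrow> (X has_vector_derivative (A u *v X u)) (at u within {1..})"
    and t0: "t0 \<ge> 1" "X t0 = 0" and tau: "\<tau> \<ge> 1"
  shows "X \<tau> = 0"
proof -
  define hi where "hi = max \<tau> t0"
  have "bounded (A ` {1..hi})"
    by (intro compact_imp_bounded compact_continuous_image continuous_on_subset[OF contA]) auto
  then obtain M where M: "\<And>u. u \<in> {1..hi} \<Longrightarrow> norm (A u) \<le> M"
    unfolding bounded_iff by (metis image_eqI)
  have "1 \<in> {1..hi}" using t0 unfolding hi_def by auto
  then have M0: "M \<ge> 0" using M[of 1] norm_ge_zero[of "A 1"] by linarith
  define L where "L = real CARD('d) * real CARD('d) * M"
  have L0: "L \<ge> 0" unfolding L_def using M0 by simp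
  have AL: "norm (A u *v y) \<le> L * norm y" if "u \<in> {1..hi}" for u y
  proof -
    have "\<bar>A u $ i $ j\<bar> \<le> M" for i j
      using component_le_norm_cart[of "A u $ i" j] Finite_Cartesian_Product.norm_nth_le[of "A u" i] M[OF that]
      by linarith
    then have "onorm ((*v) (A u)) \<le> L" unfolding L_def by (rule onorm_le_matrix_component)
    moreover have "norm (A u *v y) \<le> onorm ((*v) (A u)) * norm y"
      by (rule onorm[OF matrix_vector_mul_bounded_linear])
    moreover have "onorm ((*v) (A u)) * norm y \<le> L * norm y" using calculation(1) by (simp add: mult_right_mono)
    ultimately show ?thesis by linarith
  qed
  define f where "f u = X u \<bullet> X u" for u
  define f' where "f' u = 2 * (X u \<bullet> (A u *v X u))" for u
  have df: "(f has_real_derivative f' u) (at u within {1..})" if "u \<ge> 1" for u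
  proof -
    have d: "(X has_derivative (\<lambda>h. h *\<^sub>R (A u *v X u))) (at u within {1..})"
      using der[OF that] unfolding has_vector_derivative_def .
    have "((\<lambda>u. X u \<bullet> X u) has_derivative
       (\<lambda>h. X u \<bullet> (h *\<^sub>R (A u *v X u)) + (h *\<^sub>R (A u *v X u)) \<bullet> X u)) (at u within {1..})"
      by (rule has_derivative_inner[OF d d])
    then show ?thesis unfolding has_field_derivative_def f_def f'_def
      by (rule has_derivative_eq_rhs) (simp add: fun_eq_iff inner_commute[of "X u"])
  qed
  have dfat: "(f has_real_derivative f' u) (at u)" if "u > 1" for u
  proof -
    have "u \<in> interior {1..}" using that by simp
    then have e: "at u within {1..} = at u" by (rule at_within_interior)
    have "(f has_real_derivative f' u) (at u within {1..})" using that by (intro df) simp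
    then show ?thesis unfolding e .
  qed
  have fbd: "\<bar>f' u\<bar> \<le> 2 * L * f u" if "u \<in> {1..hi}" for u
  proof -
    have "\<bar>X u \<bullet> (A u *v X u)\<bar> \<le> norm (X u) * norm (A u *v X u)" by (rule Cauchy_Schwarz_ineq2)
    also have "\<dots> \<le> norm (X u) * (L * norm (X u))" by (intro mult_left_mono AL that) simp
    finally have h: "\<bar>X u \<bullet> (A u *v X u)\<bar> \<le> L * (norm (X u) * norm (X u))" by (simp add: mult_ac)
    have "X u \<bullet> X u = norm (X u) * norm (X u)" by (simp add: power2_norm_eq_inner[symmetric] power2_eq_square)
    then show ?thesis unfolding f'_def f_def using h by (simp add: abs_mult)
  qed
  have f0: "f u \<ge> 0" for u unfolding f_def by simp
  have contX: "continuous_on {1..} X"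
    unfolding continuous_on_eq_continuous_within by (auto intro: has_vector_derivative_continuous der)
  then have contf: "continuous_on {1..} f" unfolding f_def by (intro continuous_intros)
  have "f \<tau> = 0"
  proof (cases "t0 \<le> \<tau>")
    case True
    define g where "g u = exp (-(2*L)*u) * f u" for u
    have "g t0 \<ge> g \<tau>"
    proof (rule DERIV_nonpos_imp_decreasing_open[OF True])
      fix u assume u: "t0 < u" "u < \<tau>"
      have "(g has_real_derivative (exp (-(2*L)*u) * f' u + (-(2*L)) * exp (-(2*L)*u) * f u)) (at u)"
      proof -
        have e: "((\<lambda>u. exp (-(2*L)*u)) has_real_derivative exp (-(2*L)*u) * -(2*L)) (at u)"
          by (auto intro!: derivative_eq_intros)
        have "(f has_real_derivative f' u) (at u)" using u t0 by (intro dfat) auto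
        from DERIV_mult[OF e this] show ?thesis unfolding g_def
          by (rule DERIV_cong) (simp add: algebra_simps)
      qed
      moreover have "exp (-(2*L)*u) * f' u + (-(2*L)) * exp (-(2*L)*u) * f u \<le> 0"
      proof -
        have "f' u \<le> 2 * L * f u" using fbd[of u] u t0 unfolding hi_def by auto
        then have "exp (-(2*L)*u) * f' u \<le> exp (-(2*L)*u) * (2 * L * f u)"
          by (intro mult_left_mono) auto
        then show ?thesis by (simp add: algebra_simps)
      qed
      ultimately show "\<exists>y. (g has_real_derivative y) (at u) \<and> y \<le> 0" by blast
    next
      show "continuous_on {t0..\<tau>} g" unfolding g_def using t0
        by (intro continuous_intros continuous_on_subset[OF contf]) auto
    qed
    moreover have "g t0 = 0" unfolding g_def f_def using t0 by simp
    ultimately have "exp (-(2*L)*\<tau>) * f \<tau> \<le> 0" unfolding g_def by simp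
    then have "f \<tau> \<le> 0" by (simp add: mult_le_0_iff)
    then show ?thesis using f0[of \<tau>] by simp
  next
    case False
    then have le: "\<tau> \<le> t0" by simp
    define g where "g u = exp ((2*L)*u) * f u" for u
    have "g \<tau> \<le> g t0"
    proof (rule DERIV_nonneg_imp_increasing_open[OF le])
      fix u assume u: "\<tau> < u" "u < t0"
      have "(g has_real_derivative (exp ((2*L)*u) * f' u + (2*L) * exp ((2*L)*u) * f u)) (at u)"
      proof -
        have e: "((\<lambda>u. exp ((2*L)*u)) has_real_derivative exp ((2*L)*u) * (2*L)) (at u)"
          by (auto intro!: derivative_eq_intros)
        have "(f has_real_derivative f' u) (at u)" using u tau by (intro dfat) auto
        from DERIV_mult[OF e this] show ?thesis unfolding g_def
          by (rule DERIV_cong) (simp add: algebra_simps)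
      qed
      moreover have "exp ((2*L)*u) * f' u + (2*L) * exp ((2*L)*u) * f u \<ge> 0"
      proof -
        have "- f' u \<le> 2 * L * f u" using fbd[of u] u tau unfolding hi_def by auto
        then have "exp ((2*L)*u) * (- f' u) \<le> exp ((2*L)*u) * (2 * L * f u)"
          by (intro mult_left_mono) auto
        then show ?thesis by (simp add: algebra_simps)
      qed
      ultimately show "\<exists>y. (g has_real_derivative y) (at u) \<and> y \<ge> 0" by blast
    next
      show "continuous_on {\<tau>..t0} g" unfolding g_def using tau
        by (intro continuous_intros continuous_on_subset[OF contf]) auto
    qed
    moreover have "g t0 = 0" unfolding g_def f_def using t0 by simp
    ultimately have "exp ((2*L)*\<tau>) * f \<tau> \<le> 0" unfolding g_def by simp
    then have "f \<tau> \<le> 0" by (simp add: mult_le_0_iff)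
    then show ?thesis using f0[of \<tau>] by simp
  qed
  then show ?thesis unfolding f_def by simp
qed



lemma bl_mv: "bounded_linear (\<lambda>M::real^'d^'d. M *v v)"
proof -
  have "linear (\<lambda>M::real^'d^'d. M *v v)"
    by (rule linearI) (simp_all add: matrix_vector_mult_add_rdistrib scaleR_matrix_vector_assoc)
  then show ?thesis using linear_conv_bounded_linear by blast
qed

lemma cocycle:
  fixes A :: "real \<Rightarrow> real^'d^'d" and T :: "real \<Rightarrow> real \<Rightarrow> real^'d^'d"
  assumes contA: "continuous_on {1..} A" and ev: "evolution_family A T"
    and "\<tau> \<ge> 1" "t \<ge> 1" "s \<ge> 1"
  shows "T \<tau> t ** T t s = T \<tau> s"
proof -
  have dT: "((\<lambda>u. T u r *v v) has_vector_derivative (A u *v (T u r *v v))) (at u within {1..})"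
    if "r \<ge> 1" "u \<ge> 1" for r u v
  proof -
    have "((\<lambda>u. T u r) has_vector_derivative (A u ** T u r)) (at u within {1..})"
      using ev that unfolding evolution_family_def by blast
    from bounded_linear.has_vector_derivative[OF bl_mv this, of v]
    show ?thesis by (simp add: matrix_vector_mul_assoc)
  qed
  have Tss: "T r r = mat 1" if "r \<ge> 1" for r using ev that unfolding evolution_family_def by blast
  have "(T \<tau> t ** T t s) *v w = T \<tau> s *v w" for w
  proof -
    define X where "X u = T u t *v (T t s *v w) - T u s *v w" for u
    have "X \<tau> = 0"
    proof (rule ode_unique[OF contA _ _ _ \<open>\<tau> \<ge> 1\<close>])
      fix u :: real assume u: "u \<ge> 1"
      show "(X has_vector_derivative (A u *v X u)) (at u within {1..})"
        unfolding X_def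
        by (rule has_vector_derivative_eq_rhs[OF has_vector_derivative_diff[OF dT dT]])
           (use u assms in \<open>auto simp: matrix_vector_mult_diff_distrib\<close>)
    next
      show "t \<ge> 1" by fact
      show "X t = 0" unfolding X_def using Tss[OF \<open>t \<ge> 1\<close>] by (simp add: matrix_vector_mul_assoc)
    qed
    then show ?thesis unfolding X_def by (simp add: matrix_vector_mul_assoc)
  qed
  then show ?thesis using matrix_eq by blast
qed



definition phi :: "real \<Rightarrow> real \<Rightarrow> real \<Rightarrow> real" where
  "phi lam a r = min (r powr lam) (r powr a)"

lemma phi_pos: "r > 0 \<Longrightarrow> phi lam a r > 0" unfolding phi_def by simp

lemma phi_ge1: "0 < lam \<Longrightarrow> lam \<le> a \<Longrightarrow> r \<ge> 1 \<Longrightarrow> phi lam a r = r powr lam"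
  unfolding phi_def by (simp add: powr_mono)

lemma phi_le1: "0 < lam \<Longrightarrow> lam \<le> a \<Longrightarrow> 0 < r \<Longrightarrow> r \<le> 1 \<Longrightarrow> phi lam a r = r powr a"
proof -
  assume "0 < lam" "lam \<le> a" "0 < r" "r \<le> 1"
  then have "ln r \<le> 0" by simp
  then have "a * ln r \<le> lam * ln r" using \<open>lam \<le> a\<close> by (simp add: mult_right_mono_neg)
  then show ?thesis unfolding phi_def powr_def using \<open>0 < r\<close> by (simp add: min_def)
qed

lemma phi_one: "phi lam a 1 = 1" unfolding phi_def by simp

lemma phi_mult: "0 < r \<Longrightarrow> 0 < q \<Longrightarrow> phi lam a r * phi lam a q \<le> phi lam a (r * q)"
proof -
  assume r: "0 < r" and q: "0 < q"
  have "phi lam a r * phi lam a q \<le> r powr lam * q powr lam"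
    unfolding phi_def using r q by (intro mult_mono) auto
  moreover have "phi lam a r * phi lam a q \<le> r powr a * q powr a"
    unfolding phi_def using r q by (intro mult_mono) auto
  ultimately show ?thesis unfolding phi_def using r q by (simp add: powr_mult)
qed

lemma phi_mult2: "0 < lam \<Longrightarrow> lam \<le> a \<Longrightarrow> 1 \<le> r \<Longrightarrow> 0 < q \<Longrightarrow> phi lam a (r * q) \<le> r powr a * phi lam a q"
proof -
  assume l: "0 < lam" "lam \<le> a" and r: "1 \<le> r" and q: "0 < q"
  have "phi lam a (r * q) \<le> r powr lam * q powr lam" unfolding phi_def using r q by (simp add: powr_mult)
  also have "\<dots> \<le> r powr a * q powr lam" using r l by (intro mult_right_mono powr_mono) auto
  finally have 1: "phi lam a (r * q) \<le> r powr a * q powr lam" .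
  have 2: "phi lam a (r * q) \<le> r powr a * q powr a" unfolding phi_def using r q by (simp add: powr_mult)
  show ?thesis using 1 2 unfolding phi_def by (simp add: min_mult_distrib_left)
qed

lemma sup_le_mult:
  fixes f g :: "real \<Rightarrow> real"
  assumes "c \<ge> 0" "bdd_above (g ` {1..})" "\<And>\<tau>. \<tau> \<ge> 1 \<Longrightarrow> f \<tau> \<le> c * g \<tau>"
  shows "(SUP \<tau>\<in>{1..}. f \<tau>) \<le> c * (SUP \<tau>\<in>{1..}. g \<tau>)"
proof (rule cSUP_least)
  show "{1::real..} \<noteq> {}" by auto
  fix \<tau> :: real assume "\<tau> \<in> {1..}"
  then have "g \<tau> \<le> (SUP \<tau>\<in>{1..}. g \<tau>)" by (intro cSUP_upper assms(2))
  then have "c * g \<tau> \<le> c * (SUP \<tau>\<in>{1..}. g \<tau>)" using assms(1) by (rule mult_left_mono)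
  then show "f \<tau> \<le> c * (SUP \<tau>\<in>{1..}. g \<tau>)" using assms(3) \<open>\<tau> \<in> {1..}\<close> by force
qed

lemma sup_add_le:
  fixes f g h :: "real \<Rightarrow> real"
  assumes "bdd_above (f ` {1..})" "bdd_above (g ` {1..})" "\<And>\<tau>. \<tau> \<ge> 1 \<Longrightarrow> h \<tau> \<le> f \<tau> + g \<tau>"
  shows "(SUP \<tau>\<in>{1..}. h \<tau>) \<le> (SUP \<tau>\<in>{1..}. f \<tau>) + (SUP \<tau>\<in>{1..}. g \<tau>)"
proof (rule cSUP_least)
  show "{1::real..} \<noteq> {}" by auto
  fix \<tau> :: real assume "\<tau> \<in> {1..}"
  then have "f \<tau> \<le> (SUP \<tau>\<in>{1..}. f \<tau>)" "g \<tau> \<le> (SUP \<tau>\<in>{1..}. g \<tau>)"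
    by (auto intro: cSUP_upper assms)
  then show "h \<tau> \<le> (SUP \<tau>\<in>{1..}. f \<tau>) + (SUP \<tau>\<in>{1..}. g \<tau>)" using assms(3) \<open>\<tau> \<in> {1..}\<close> by force
qed

lemma sup_zero: "(\<And>\<tau>. \<tau> \<ge> 1 \<Longrightarrow> f \<tau> = (0::real)) \<Longrightarrow> (SUP \<tau>\<in>{1::real..}. f \<tau>) = 0"
proof -
  assume "\<And>\<tau>. \<tau> \<ge> 1 \<Longrightarrow> f \<tau> = (0::real)"
  then have "(SUP \<tau>\<in>{1::real..}. f \<tau>) = (SUP \<tau>\<in>{1::real..}. 0)" by (intro SUP_cong) auto
  then show ?thesis by simp
qed

lemma sup_ge: "bdd_above (f ` {1..}) \<Longrightarrow> \<tau> \<ge> 1 \<Longrightarrow> f \<tau> \<le> (SUP \<tau>\<in>{1::real..}. f \<tau>::real)"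
  by (intro cSUP_upper) auto

lemma sup_bound: "(\<And>\<tau>. \<tau> \<ge> 1 \<Longrightarrow> f \<tau> \<le> B) \<Longrightarrow> (SUP \<tau>\<in>{1::real..}. f \<tau>::real) \<le> B"
  by (intro cSUP_least) auto

lemma op_le:
  fixes N :: "real ^ 'd \<Rightarrow> real" and M :: "real ^ 'd ^ 'd"
  assumes "is_norm N" "B \<ge> 0" "\<And>x. N (M *v x) \<le> B * N x"
  shows "op_norm N M \<le> B"
  unfolding op_norm_def
proof (rule cSup_least)
  show "(\<lambda>x. N (M *v x)) ` {x. N x \<le> 1} \<noteq> {}" using isn(2)[OF assms(1)] by (auto intro!: exI[of _ 0])
  fix y assume "y \<in> (\<lambda>x. N (M *v x)) ` {x. N x \<le> 1}"
  then obtain x where x: "N x \<le> 1" "y = N (M *v x)" by auto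
  have "B * N x \<le> B * 1" using x(1) assms(2) by (rule mult_left_mono)
  then show "y \<le> B" using assms(3)[of x] x by simp
qed



lemma dir21:
  fixes T :: "real \<Rightarrow> real \<Rightarrow> real ^ 'd ^ 'd"
    and N :: "real ^ 'd \<Rightarrow> real" and S :: "real \<Rightarrow> real ^ 'd \<Rightarrow> real"
  assumes N: "is_norm N" and D: "strong_poly_dichotomy_wrt S T"
    and C: "C > 0" "\<delta> \<ge> 0" and E: "\<And>t x. t \<ge> 1 \<Longrightarrow> N x \<le> S t x \<and> S t x \<le> C * t powr \<delta> * N x"
  shows "nonuniform_strong_poly_dichotomy N T"
proof -
  obtain K a lam P where K: "K > 0" "a \<ge> lam" "lam > 0" and PP: "\<forall>t\<ge>1. P t ** P t = P t"
    and H: "\<And>t s. 1 \<le> s \<and> s \<le> t \<Longrightarrow>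
         P t ** T t s = T t s ** P s \<and>
         (\<forall>x. S t (T t s ** P s *v x) \<le> K * (t / s) powr (- lam) * S s x) \<and>
         (\<forall>x. S s (T s t ** (mat 1 - P t) *v x) \<le> K * (t / s) powr (- lam) * S t x) \<and>
         (\<forall>x. S t (T t s *v x) \<le> K * (t / s) powr a * S s x) \<and>
         (\<forall>x. S s (T s t *v x) \<le> K * (t / s) powr a * S t x)"
    using D unfolding strong_poly_dichotomy_wrt_def by blast
  have key: "op_norm N M \<le> K * c * C * r powr \<delta>"
    if "c \<ge> 0" "r \<ge> 1" "r' \<ge> 1" "q \<ge> 1" "\<And>x. S q (M *v x) \<le> K * c * S r x" for M c r r' q
  proof (rule op_le[OF N])
    show "K * c * C * r powr \<delta> \<ge> 0" using K C that by simp
    fix x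
    have "N (M *v x) \<le> S q (M *v x)" using E[OF that(4)] by blast
    also have "\<dots> \<le> K * c * S r x" by (rule that(5))
    also have "\<dots> \<le> K * c * (C * r powr \<delta> * N x)"
      using E[OF that(2), of x] K that(1) by (intro mult_left_mono) auto
    finally show "N (M *v x) \<le> K * c * C * r powr \<delta> * N x" by (simp add: mult_ac)
  qed
  show ?thesis unfolding nonuniform_strong_poly_dichotomy_def
  proof (rule exI[of _ "K * C"], rule exI[of _ a], rule exI[of _ lam], rule exI[of _ \<delta>], rule exI[of _ P],
      intro conjI allI impI)
    show "K * C > 0" using K C by simp
    show "a \<ge> lam" using K C by auto
    show "lam > 0" using K C by auto
    show "\<delta> \<ge> 0" using K C by auto
    show "\<And>t. t \<ge> 1 \<Longrightarrow> P t ** P t = P t" using PP by blast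
    fix t s :: real assume ts: "1 \<le> s \<and> s \<le> t"
    note h = H[OF ts]
    show "P t ** T t s = T t s ** P s" using h by blast
    have "op_norm N (T t s ** P s) \<le> K * (t / s) powr (- lam) * C * s powr \<delta>"
      by (rule key[where q = t]) (use h ts in auto)
    then show "op_norm N (T t s ** P s) \<le> K * C * (t / s) powr (- lam) * s powr \<delta>" by (simp add: mult_ac)
    have "op_norm N (T s t ** (mat 1 - P t)) \<le> K * (t / s) powr (- lam) * C * t powr \<delta>"
      by (rule key[where q = s]) (use h ts in auto)
    then show "op_norm N (T s t ** (mat 1 - P t)) \<le> K * C * (t / s) powr (- lam) * t powr \<delta>" by (simp add: mult_ac)
    have "op_norm N (T t s) \<le> K * (t / s) powr a * C * s powr \<delta>"
      by (rule key[where q = t]) (use h ts in auto)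
    then show "op_norm N (T t s) \<le> K * C * (t / s) powr a * s powr \<delta>" by (simp add: mult_ac)
    have "op_norm N (T s t) \<le> K * (t / s) powr a * C * t powr \<delta>"
      by (rule key[where q = s]) (use h ts in auto)
    then show "op_norm N (T s t) \<le> K * C * (t / s) powr a * t powr \<delta>" by (simp add: mult_ac)
  qed
qed



lemma phA: "0 < lam \<Longrightarrow> lam \<le> a \<Longrightarrow> x > 0 \<Longrightarrow> s > 0 \<Longrightarrow> s \<le> t \<Longrightarrow>
   phi lam a x \<le> (t/s) powr (-lam) * phi lam a (x * (t/s))"
proof -
  assume l: "0 < lam" "lam \<le> a" and x: "x > 0" and s: "s > 0" "s \<le> t"
  have ts: "t/s \<ge> 1" using s by simp
  have "phi lam a x * (t/s) powr lam \<le> phi lam a (x * (t/s))"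
    using phi_mult[of x "t/s" lam a] phi_ge1[OF l ts] x s by simp
  then have "(t/s) powr (-lam) * (phi lam a x * (t/s) powr lam) \<le> (t/s) powr (-lam) * phi lam a (x * (t/s))"
    by (rule mult_left_mono) simp
  moreover have "(t/s) powr (-lam) * (t/s) powr lam = 1"
  proof -
    have "(t/s) powr lam > 0" using s by simp
    then show ?thesis by (simp add: powr_minus)
  qed
  ultimately show ?thesis by (simp add: mult_ac)
qed

lemma phB: "0 < lam \<Longrightarrow> lam \<le> a \<Longrightarrow> x > 0 \<Longrightarrow> s > 0 \<Longrightarrow> s \<le> t \<Longrightarrow>
   phi lam a x \<le> (t/s) powr a * phi lam a (x * (t/s))"
proof -
  assume l: "0 < lam" "lam \<le> a" and x: "x > 0" and s: "s > 0" "s \<le> t"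
  have ts: "t/s \<ge> 1" using s by simp
  have "(t/s) powr lam \<ge> 1" using ts l by (simp add: ge_one_powr_ge_zero)
  then have "(t/s) powr (-lam) \<le> 1" by (simp add: powr_minus inverse_le_1_iff)
  also have "1 \<le> (t/s) powr a" using ts l by (simp add: ge_one_powr_ge_zero)
  finally have "(t/s) powr (-lam) * phi lam a (x * (t/s)) \<le> (t/s) powr a * phi lam a (x * (t/s))"
    by (rule mult_right_mono) (use x s phi_pos[of "x * (t/s)" lam a] in simp)
  then show ?thesis using phA[OF l x s] by linarith
qed

lemma phC: "0 < lam \<Longrightarrow> lam \<le> a \<Longrightarrow> x > 0 \<Longrightarrow> s > 0 \<Longrightarrow> s \<le> t \<Longrightarrow>
   phi lam a ((t/s) * x) \<le> (t/s) powr a * phi lam a x"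
  by (rule phi_mult2) auto

lemma sup_cmult:
  fixes f :: "real \<Rightarrow> real"
  assumes c: "c \<ge> 0" and b: "bdd_above (f ` {1..})"
  shows "(SUP \<tau>\<in>{1..}. c * f \<tau>) = c * (SUP \<tau>\<in>{1..}. f \<tau>)"
proof (rule antisym)
  show "(SUP \<tau>\<in>{1..}. c * f \<tau>) \<le> c * (SUP \<tau>\<in>{1..}. f \<tau>)" by (rule sup_le_mult[OF c b]) simp
  show "c * (SUP \<tau>\<in>{1..}. f \<tau>) \<le> (SUP \<tau>\<in>{1..}. c * f \<tau>)"
  proof (cases "c = 0")
    case True then show ?thesis by (simp add: sup_zero)
  next
    case False
    then have cp: "c > 0" using c by simp
    obtain M where M: "\<And>\<tau>. \<tau> \<in> {1..} \<Longrightarrow> f \<tau> \<le> M" using b unfolding bdd_above_def by auto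
    have b2: "bdd_above ((\<lambda>\<tau>. c * f \<tau>) ` {1..})"
      by (rule bdd_aboveI2[of _ _ "c * M"]) (use M c in \<open>auto intro: mult_left_mono\<close>)
    have "(SUP \<tau>\<in>{1..}. f \<tau>) \<le> (1/c) * (SUP \<tau>\<in>{1..}. c * f \<tau>)"
      by (rule sup_le_mult[OF _ b2]) (use cp in auto)
    then show ?thesis using cp by (simp add: field_simps)
  qed
qed



lemma dir12:
  fixes A :: "real \<Rightarrow> real ^ 'd ^ 'd"
    and T :: "real \<Rightarrow> real \<Rightarrow> real ^ 'd ^ 'd"
    and N :: "real ^ 'd \<Rightarrow> real"
  assumes contA: "continuous_on {1..} A" and ev: "evolution_family A T" and N: "is_norm N"
    and D: "nonuniform_strong_poly_dichotomy N T"
  shows "\<exists>S :: real \<Rightarrow> real ^ 'd \<Rightarrow> real.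
        (\<forall>t\<ge>1. is_norm (S t)) \<and> strong_poly_dichotomy_wrt S T \<and>
        (\<exists>C \<delta>. C > 0 \<and> \<delta> \<ge> 0 \<and>
           (\<forall>t x. t \<ge> 1 \<longrightarrow> N x \<le> S t x \<and> S t x \<le> C * t powr \<delta> * N x))"
proof -
  obtain K a lam \<epsilon> P where K: "K > 0" "a \<ge> lam" "lam > 0" "\<epsilon> \<ge> 0"
    and PP: "\<forall>t\<ge>1. P t ** P t = P t"
    and H: "\<And>t s. 1 \<le> s \<and> s \<le> t \<Longrightarrow>
         P t ** T t s = T t s ** P s \<and>
         op_norm N (T t s ** P s) \<le> K * (t / s) powr (- lam) * s powr \<epsilon> \<and>
         op_norm N (T s t ** (mat 1 - P t)) \<le> K * (t / s) powr (- lam) * t powr \<epsilon> \<and>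
         op_norm N (T t s) \<le> K * (t / s) powr a * s powr \<epsilon> \<and>
         op_norm N (T s t) \<le> K * (t / s) powr a * t powr \<epsilon>"
    using D unfolding nonuniform_strong_poly_dichotomy_def by blast
  have l: "0 < lam" "lam \<le> a" using K by auto
  define Q where "Q t = mat 1 - P t" for t
  note Nf = isn[OF N]
  have N0: "N x \<ge> 0" for x by (rule Nf(1))
  have Tid: "T r r = mat 1" if "r \<ge> 1" for r using ev that unfolding evolution_family_def by blast
  have coc: "T \<tau> t *v (T t s *v x) = T \<tau> s *v x" if "\<tau> \<ge> 1" "t \<ge> 1" "s \<ge> 1" for \<tau> t s x
    using cocycle[OF contA ev that] by (simp add: matrix_vector_mul_assoc)
  have ptw: "N (M *v x) \<le> B * N x" if "op_norm N M \<le> B" for M B x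
  proof -
    have "N (M *v x) \<le> op_norm N M * N x" by (rule op_norm_pt[OF N])
    also have "\<dots> \<le> B * N x" using that N0[of x] by (rule mult_right_mono)
    finally show ?thesis .
  qed
  have B1: "N (T t s *v (P s *v x)) \<le> K * (t / s) powr (- lam) * s powr \<epsilon> * N x"
    if "1 \<le> s" "s \<le> t" for s t x
    using ptw[of "T t s ** P s"] H[of s t] that by (simp add: matrix_vector_mul_assoc)
  have B2: "N (T s t *v (Q t *v x)) \<le> K * (t / s) powr (- lam) * t powr \<epsilon> * N x"
    if "1 \<le> s" "s \<le> t" for s t x
    using ptw[of "T s t ** (mat 1 - P t)"] H[of s t] that by (simp add: matrix_vector_mul_assoc Q_def)
  have B3: "N (T t s *v x) \<le> K * (t / s) powr a * s powr \<epsilon> * N x"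
    if "1 \<le> s" "s \<le> t" for s t x
    using ptw[of "T t s"] H[of s t] that by simp
  have B4: "N (T s t *v x) \<le> K * (t / s) powr a * t powr \<epsilon> * N x"
    if "1 \<le> s" "s \<le> t" for s t x
    using ptw[of "T s t"] H[of s t] that by simp
  have Pv: "P t *v (T t s *v x) = T t s *v (P s *v x)" if "1 \<le> s" "s \<le> t" for s t x
    using H[of s t] that by (simp add: matrix_vector_mul_assoc)
  have Pc: "P r *v (T r q *v x) = T r q *v (P q *v x)" if "1 \<le> r" "1 \<le> q" for r q x
  proof (cases "q \<le> r")
    case True then show ?thesis using Pv that by blast
  next
    case False
    have "P r *v (T r q *v x) = T r q *v (T q r *v (P r *v (T r q *v x)))"
      using coc[of r q r] Tid[of r] that by simp
    also have "\<dots> = T r q *v (P q *v (T q r *v (T r q *v x)))"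
      using Pv[of r q] that False by simp
    also have "\<dots> = T r q *v (P q *v x)"
      using coc[of q r q] Tid[of q] that by simp
    finally show ?thesis .
  qed
  have Qc: "Q r *v (T r q *v x) = T r q *v (Q q *v x)" if "1 \<le> r" "1 \<le> q" for r q x
    using Pc[OF that, of x] unfolding Q_def
    by (simp add: matrix_vector_mult_diff_rdistrib matrix_vector_mult_diff_distrib)
  have PPv: "P r *v (P r *v x) = P r *v x" if "1 \<le> r" for r x
    using PP that by (simp add: matrix_vector_mul_assoc)
  have QQv: "Q r *v (Q r *v x) = Q r *v x" if "1 \<le> r" for r x
    using PPv[OF that] unfolding Q_def
    by (simp add: matrix_vector_mult_diff_rdistrib matrix_vector_mult_diff_distrib)
  have PQv: "P r *v (Q r *v x) = 0" if "1 \<le> r" for r x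
    using PPv[OF that] unfolding Q_def
    by (simp add: matrix_vector_mult_diff_rdistrib matrix_vector_mult_diff_distrib)
  have QPv: "Q r *v (P r *v x) = 0" if "1 \<le> r" for r x
    using PPv[OF that] unfolding Q_def
    by (simp add: matrix_vector_mult_diff_rdistrib matrix_vector_mult_diff_distrib)
  have PQsum: "P r *v x + Q r *v x = x" for r x
    unfolding Q_def by (simp add: matrix_vector_mult_diff_rdistrib)
  have tge: "r powr \<epsilon> \<ge> 1" if "r \<ge> 1" for r using that K(4) by (simp add: ge_one_powr_ge_zero)
  have Np: "N (P r *v x) \<le> K * r powr \<epsilon> * N x" if "1 \<le> r" for r x
    using B1[of r r x] Tid[of r] that by simp
  have Nq: "N (Q r *v x) \<le> (1 + K) * r powr \<epsilon> * N x" if "1 \<le> r" for r x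
  proof -
    have "Q r *v x = x + (-1) *\<^sub>R (P r *v x)" unfolding Q_def by (simp add: matrix_vector_mult_diff_rdistrib)
    then have "N (Q r *v x) \<le> N x + N ((-1) *\<^sub>R (P r *v x))" using Nf(4) by metis
    then have "N (Q r *v x) \<le> N x + N (P r *v x)" using Nf(3)[of "-1"] by simp
    also have "\<dots> \<le> r powr \<epsilon> * N x + K * r powr \<epsilon> * N x"
      using Np[OF that, of x] mult_right_mono[OF tge[OF that] N0[of x]] by simp
    finally show ?thesis by (simp add: algebra_simps)
  qed
  define ph where "ph = phi lam a"
  have ph0: "ph r \<ge> 0" if "r > 0" for r using phi_pos[OF that, of lam a] unfolding ph_def by simp
  define W1 where "W1 t x \<tau> = N (T \<tau> t *v (P t *v x)) * ph (\<tau> / t)" for t x \<tau>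
  define W2 where "W2 t x \<tau> = N (T \<tau> t *v (Q t *v x)) * ph (t / \<tau>)" for t x \<tau>
  define S where "S t x = (SUP \<tau>\<in>{1..}. W1 t x \<tau>) + (SUP \<tau>\<in>{1..}. W2 t x \<tau>)" for t x
  define C1 where "C1 = 2 * K + K * K"
  have W10: "W1 t x \<tau> \<ge> 0" if "t \<ge> 1" "\<tau> \<ge> 1" for t x \<tau>
    unfolding W1_def using that N0 ph0 by simp
  have W20: "W2 t x \<tau> \<ge> 0" if "t \<ge> 1" "\<tau> \<ge> 1" for t x \<tau>
    unfolding W2_def using that N0 ph0 by simp
  have can1: "y powr (-l) * y powr l = 1" if "y > 0" for y l :: real
    using that by (simp add: powr_minus)
  have can2: "(u/v) powr l * (v/u) powr l = 1" if "u > 0" "v > 0" for u v l :: real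
  proof -
    have "(u/v) powr l * (v/u) powr l = ((u/v) * (v/u)) powr l" using powr_mult[of "u/v" "v/u" l] that by simp
    also have "(u/v) * (v/u) = 1" using that by simp
    finally show ?thesis by simp
  qed
  have tt: "t powr \<epsilon> * t powr \<epsilon> = t powr (2 * \<epsilon>)" if "t \<ge> 1" for t
    using that by (simp add: powr_add[symmetric])
  have t12: "t powr \<epsilon> \<le> t powr (2 * \<epsilon>)" if "t \<ge> 1" for t
    using that K(4) by (intro powr_mono) auto
  have KC1: "K \<le> C1" "K * K \<le> C1" "K * (1 + K) \<le> C1" unfolding C1_def using K by (auto simp: algebra_simps)
  have cb1: "K * t powr \<epsilon> * N x \<le> C1 * t powr (2 * \<epsilon>) * N x" if "t \<ge> 1" for t x
    using K KC1 t12[OF that] N0[of x] tge[OF that]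
    by (intro mult_right_mono mult_mono) auto
  have cb2: "c * (t powr \<epsilon> * t powr \<epsilon>) * N x \<le> C1 * t powr (2 * \<epsilon>) * N x" if "t \<ge> 1" "c \<le> C1" for t x c
    unfolding tt[OF that(1)] using that N0[of x] by (intro mult_right_mono) auto
  have W1bd: "W1 t x \<tau> \<le> C1 * t powr (2 * \<epsilon>) * N x" if "t \<ge> 1" "\<tau> \<ge> 1" for t x \<tau>
  proof (cases "t \<le> \<tau>")
    case True
    have e: "ph (\<tau>/t) = (\<tau>/t) powr lam" unfolding ph_def using True that by (intro phi_ge1 l) auto
    have "W1 t x \<tau> \<le> (K * (\<tau>/t) powr (-lam) * t powr \<epsilon> * N x) * (\<tau>/t) powr lam"
      unfolding W1_def e by (rule mult_right_mono[OF B1]) (use True that in auto)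
    also have "\<dots> = K * t powr \<epsilon> * N x * ((\<tau>/t) powr (-lam) * (\<tau>/t) powr lam)" by (simp add: mult_ac)
    also have "\<dots> = K * t powr \<epsilon> * N x" using can1[of "\<tau>/t" lam] that by simp
    also have "\<dots> \<le> C1 * t powr (2 * \<epsilon>) * N x" by (rule cb1[OF that(1)])
    finally show ?thesis .
  next
    case False
    have e: "ph (\<tau>/t) = (\<tau>/t) powr a" unfolding ph_def using False that by (intro phi_le1 l) auto
    have "N (T \<tau> t *v (P t *v x)) \<le> K * (t/\<tau>) powr a * t powr \<epsilon> * N (P t *v x)"
      by (rule B4) (use False that in auto)
    also have "\<dots> \<le> K * (t/\<tau>) powr a * t powr \<epsilon> * (K * t powr \<epsilon> * N x)"
      by (rule mult_left_mono[OF Np]) (use that K in auto)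
    finally have "W1 t x \<tau> \<le> (K * (t/\<tau>) powr a * t powr \<epsilon> * (K * t powr \<epsilon> * N x)) * (\<tau>/t) powr a"
      unfolding W1_def e by (rule mult_right_mono) simp
    also have "\<dots> = (K * K) * (t powr \<epsilon> * t powr \<epsilon>) * N x * ((t/\<tau>) powr a * (\<tau>/t) powr a)"
      by (simp add: mult_ac)
    also have "\<dots> = (K * K) * (t powr \<epsilon> * t powr \<epsilon>) * N x" using can2[of t \<tau> a] that by simp
    also have "\<dots> \<le> C1 * t powr (2 * \<epsilon>) * N x" by (rule cb2[OF that(1) KC1(2)])
    finally show ?thesis .
  qed
  have W2bd: "W2 t x \<tau> \<le> C1 * t powr (2 * \<epsilon>) * N x" if "t \<ge> 1" "\<tau> \<ge> 1" for t x \<tau>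
  proof (cases "\<tau> \<le> t")
    case True
    have e: "ph (t/\<tau>) = (t/\<tau>) powr lam" unfolding ph_def using True that by (intro phi_ge1 l) auto
    have "W2 t x \<tau> \<le> (K * (t/\<tau>) powr (-lam) * t powr \<epsilon> * N x) * (t/\<tau>) powr lam"
      unfolding W2_def e by (rule mult_right_mono[OF B2]) (use True that in auto)
    also have "\<dots> = K * t powr \<epsilon> * N x * ((t/\<tau>) powr (-lam) * (t/\<tau>) powr lam)" by (simp add: mult_ac)
    also have "\<dots> = K * t powr \<epsilon> * N x" using can1[of "t/\<tau>" lam] that by simp
    also have "\<dots> \<le> C1 * t powr (2 * \<epsilon>) * N x" by (rule cb1[OF that(1)])
    finally show ?thesis .
  next
    case False
    have e: "ph (t/\<tau>) = (t/\<tau>) powr a" unfolding ph_def using False that by (intro phi_le1 l) auto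
    have "N (T \<tau> t *v (Q t *v x)) \<le> K * (\<tau>/t) powr a * t powr \<epsilon> * N (Q t *v x)"
      by (rule B3) (use False that in auto)
    also have "\<dots> \<le> K * (\<tau>/t) powr a * t powr \<epsilon> * ((1 + K) * t powr \<epsilon> * N x)"
      by (rule mult_left_mono[OF Nq]) (use that K in auto)
    finally have "W2 t x \<tau> \<le> (K * (\<tau>/t) powr a * t powr \<epsilon> * ((1 + K) * t powr \<epsilon> * N x)) * (t/\<tau>) powr a"
      unfolding W2_def e by (rule mult_right_mono) simp
    also have "\<dots> = (K * (1 + K)) * (t powr \<epsilon> * t powr \<epsilon>) * N x * ((\<tau>/t) powr a * (t/\<tau>) powr a)"
      by (simp add: mult_ac)
    also have "\<dots> = (K * (1 + K)) * (t powr \<epsilon> * t powr \<epsilon>) * N x" using can2[of \<tau> t a] that by simp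
    also have "\<dots> \<le> C1 * t powr (2 * \<epsilon>) * N x" by (rule cb2[OF that(1) KC1(3)])
    finally show ?thesis .
  qed
  have bdd1: "bdd_above (W1 t x ` {1..})" if "t \<ge> 1" for t x
    by (rule bdd_aboveI2[of _ _ "C1 * t powr (2 * \<epsilon>) * N x"]) (use W1bd that in auto)
  have bdd2: "bdd_above (W2 t x ` {1..})" if "t \<ge> 1" for t x
    by (rule bdd_aboveI2[of _ _ "C1 * t powr (2 * \<epsilon>) * N x"]) (use W2bd that in auto)
  have Sup_bd: "S t x \<le> (2 * C1) * t powr (2 * \<epsilon>) * N x" if "t \<ge> 1" for t x
  proof -
    have "(SUP \<tau>\<in>{1..}. W1 t x \<tau>) \<le> C1 * t powr (2 * \<epsilon>) * N x"
      by (rule sup_bound) (use W1bd that in auto)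
    moreover have "(SUP \<tau>\<in>{1..}. W2 t x \<tau>) \<le> C1 * t powr (2 * \<epsilon>) * N x"
      by (rule sup_bound) (use W2bd that in auto)
    ultimately show ?thesis unfolding S_def by simp
  qed
  have Slow: "N x \<le> S t x" if "t \<ge> 1" for t x
  proof -
    have "W1 t x t \<le> (SUP \<tau>\<in>{1..}. W1 t x \<tau>)" by (rule sup_ge[OF bdd1[OF that] that])
    moreover have "W2 t x t \<le> (SUP \<tau>\<in>{1..}. W2 t x \<tau>)" by (rule sup_ge[OF bdd2[OF that] that])
    moreover have "W1 t x t = N (P t *v x)" "W2 t x t = N (Q t *v x)"
      unfolding W1_def W2_def ph_def using Tid[OF that] that by (simp_all add: phi_one)
    moreover have "N x \<le> N (P t *v x) + N (Q t *v x)" using Nf(4)[of "P t *v x" "Q t *v x"] PQsum by simp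
    ultimately show ?thesis unfolding S_def by linarith
  qed
  have W1h: "W1 t (c *\<^sub>R x) \<tau> = \<bar>c\<bar> * W1 t x \<tau>" for t c x \<tau>
    unfolding W1_def by (simp add: matrix_vector_mult_scaleR Nf(3))
  have W2h: "W2 t (c *\<^sub>R x) \<tau> = \<bar>c\<bar> * W2 t x \<tau>" for t c x \<tau>
    unfolding W2_def by (simp add: matrix_vector_mult_scaleR Nf(3))
  have W1a: "W1 t (x + y) \<tau> \<le> W1 t x \<tau> + W1 t y \<tau>" if "t \<ge> 1" "\<tau> \<ge> 1" for t x y \<tau>
  proof -
    have "W1 t (x + y) \<tau> \<le> (N (T \<tau> t *v (P t *v x)) + N (T \<tau> t *v (P t *v y))) * ph (\<tau> / t)"
      unfolding W1_def using that ph0[of "\<tau>/t"]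
      by (intro mult_right_mono) (auto simp: matrix_vector_right_distrib Nf(4))
    then show ?thesis unfolding W1_def by (simp add: distrib_right)
  qed
  have W2a: "W2 t (x + y) \<tau> \<le> W2 t x \<tau> + W2 t y \<tau>" if "t \<ge> 1" "\<tau> \<ge> 1" for t x y \<tau>
  proof -
    have "W2 t (x + y) \<tau> \<le> (N (T \<tau> t *v (Q t *v x)) + N (T \<tau> t *v (Q t *v y))) * ph (t / \<tau>)"
      unfolding W2_def using that ph0[of "t/\<tau>"]
      by (intro mult_right_mono) (auto simp: matrix_vector_right_distrib Nf(4))
    then show ?thesis unfolding W2_def by (simp add: distrib_right)
  qed
  have Snorm: "is_norm (S t)" if t: "t \<ge> 1" for t
    unfolding is_norm_def
  proof (intro conjI allI)
    fix x
    show "0 \<le> S t x" using Slow[OF t, of x] N0[of x] by linarith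
    show "S t x = 0 \<longleftrightarrow> x = 0"
    proof
      assume "S t x = 0"
      then have "N x \<le> 0" using Slow[OF t, of x] by simp
      then show "x = 0" using N0[of x] Nf(5)[of x] by simp
    next
      assume "x = 0"
      then have "W1 t x \<tau> = 0" "W2 t x \<tau> = 0" for \<tau> unfolding W1_def W2_def by (simp_all add: Nf(2))
      then show "S t x = 0" unfolding S_def by (simp add: sup_zero)
    next
    qed
  next
    fix c x
    have "(SUP \<tau>\<in>{1..}. W1 t (c *\<^sub>R x) \<tau>) = (SUP \<tau>\<in>{1..}. \<bar>c\<bar> * W1 t x \<tau>)" by (simp add: W1h)
    also have "\<dots> = \<bar>c\<bar> * (SUP \<tau>\<in>{1..}. W1 t x \<tau>)" by (rule sup_cmult[OF _ bdd1[OF t]]) simp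
    finally have 1: "(SUP \<tau>\<in>{1..}. W1 t (c *\<^sub>R x) \<tau>) = \<bar>c\<bar> * (SUP \<tau>\<in>{1..}. W1 t x \<tau>)" .
    have "(SUP \<tau>\<in>{1..}. W2 t (c *\<^sub>R x) \<tau>) = (SUP \<tau>\<in>{1..}. \<bar>c\<bar> * W2 t x \<tau>)" by (simp add: W2h)
    also have "\<dots> = \<bar>c\<bar> * (SUP \<tau>\<in>{1..}. W2 t x \<tau>)" by (rule sup_cmult[OF _ bdd2[OF t]]) simp
    finally have 2: "(SUP \<tau>\<in>{1..}. W2 t (c *\<^sub>R x) \<tau>) = \<bar>c\<bar> * (SUP \<tau>\<in>{1..}. W2 t x \<tau>)" .
    show "S t (c *\<^sub>R x) = \<bar>c\<bar> * S t x" unfolding S_def 1 2 by (simp add: distrib_left)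
  next
    fix x y
    have 1: "(SUP \<tau>\<in>{1..}. W1 t (x + y) \<tau>) \<le> (SUP \<tau>\<in>{1..}. W1 t x \<tau>) + (SUP \<tau>\<in>{1..}. W1 t y \<tau>)"
      by (rule sup_add_le[OF bdd1[OF t] bdd1[OF t]]) (rule W1a[OF t])
    have 2: "(SUP \<tau>\<in>{1..}. W2 t (x + y) \<tau>) \<le> (SUP \<tau>\<in>{1..}. W2 t x \<tau>) + (SUP \<tau>\<in>{1..}. W2 t y \<tau>)"
      by (rule sup_add_le[OF bdd2[OF t] bdd2[OF t]]) (rule W2a[OF t])
    show "S t (x + y) \<le> S t x + S t y" unfolding S_def using 1 2 by linarith
  qed
  have Scmp: "S r u \<le> c * S q x"
    if "c \<ge> 0" "r \<ge> 1" "q \<ge> 1" "\<And>\<tau>. \<tau> \<ge> 1 \<Longrightarrow> W1 r u \<tau> \<le> c * W1 q x \<tau>"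
      "\<And>\<tau>. \<tau> \<ge> 1 \<Longrightarrow> W2 r u \<tau> \<le> c * W2 q x \<tau>" for r u c q x
  proof -
    have "(SUP \<tau>\<in>{1..}. W1 r u \<tau>) \<le> c * (SUP \<tau>\<in>{1..}. W1 q x \<tau>)"
      by (rule sup_le_mult[OF that(1) bdd1[OF that(3)] that(4)])
    moreover have "(SUP \<tau>\<in>{1..}. W2 r u \<tau>) \<le> c * (SUP \<tau>\<in>{1..}. W2 q x \<tau>)"
      by (rule sup_le_mult[OF that(1) bdd2[OF that(3)] that(5)])
    ultimately show ?thesis unfolding S_def by (simp add: distrib_left)
  qed
  have Wc: "N v * ph p \<le> c * (N v * ph p')" if "ph p \<le> c * ph p'" for v p p' c
    using mult_left_mono[OF that N0[of v]] by (simp add: mult_ac)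
  have phA': "ph p \<le> (t/s) powr (-lam) * ph p'" if "p > 0" "1 \<le> s" "s \<le> t" "p' = p * (t/s)" for p p' s t
    unfolding ph_def that(4) by (rule phA) (use that l in auto)
  have phB': "ph p \<le> (t/s) powr a * ph p'" if "p > 0" "1 \<le> s" "s \<le> t" "p' = p * (t/s)" for p p' s t
    unfolding ph_def that(4) by (rule phB) (use that l in auto)
  have phC': "ph p' \<le> (t/s) powr a * ph p" if "p > 0" "1 \<le> s" "s \<le> t" "p' = (t/s) * p" for p p' s t
    unfolding ph_def that(4) by (rule phC) (use that l in auto)
  have dich: "strong_poly_dichotomy_wrt S T"
    unfolding strong_poly_dichotomy_wrt_def
  proof (rule exI[of _ 1], rule exI[of _ a], rule exI[of _ lam], rule exI[of _ P], intro conjI allI impI)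
    show "(1::real) > 0" "a \<ge> lam" "lam > 0" using K by auto
    show "\<And>t. t \<ge> 1 \<Longrightarrow> P t ** P t = P t" using PP by blast
    fix t s :: real assume ts: "1 \<le> s \<and> s \<le> t"
    then have s1: "1 \<le> s" and st: "s \<le> t" and t1: "1 \<le> t" by auto
    show "P t ** T t s = T t s ** P s" using H[OF ts] by blast
    fix x
    show "S t (T t s ** P s *v x) \<le> 1 * (t / s) powr (- lam) * S s x"
    proof -
      define y where "y = T t s *v (P s *v x)"
      have y1: "P t *v y = y" unfolding y_def using Pv[OF s1 st] PPv[OF s1] by simp
      have y2: "Q t *v y = 0" unfolding y_def using Qc[OF t1 s1] QPv[OF s1] by simp
      have y3: "T \<tau> t *v y = T \<tau> s *v (P s *v x)" if "\<tau> \<ge> 1" for \<tau>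
        unfolding y_def using coc[OF that t1 s1] by simp
      have "S t y \<le> (t / s) powr (- lam) * S s x"
      proof (rule Scmp[OF _ t1 s1])
        fix \<tau> :: real assume \<tau>: "\<tau> \<ge> 1"
        show "W1 t y \<tau> \<le> (t / s) powr (- lam) * W1 s x \<tau>"
          unfolding W1_def y1 y3[OF \<tau>] by (rule Wc, rule phA') (use \<tau> s1 st in auto)
        show "W2 t y \<tau> \<le> (t / s) powr (- lam) * W2 s x \<tau>"
          unfolding W2_def y2 using W20[OF s1 \<tau>, of x] Nf(2) by (simp add: W2_def)
      qed simp
      then show ?thesis unfolding y_def by (simp add: matrix_vector_mul_assoc)
    qed
    show "S s (T s t ** (mat 1 - P t) *v x) \<le> 1 * (t / s) powr (- lam) * S t x"
    proof -
      define z where "z = T s t *v (Q t *v x)"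
      have z1: "P s *v z = 0" unfolding z_def using Pc[OF s1 t1] PQv[OF t1] by simp
      have z2: "Q s *v z = z" unfolding z_def using Qc[OF s1 t1] QQv[OF t1] by simp
      have z3: "T \<tau> s *v z = T \<tau> t *v (Q t *v x)" if "\<tau> \<ge> 1" for \<tau>
        unfolding z_def using coc[OF that s1 t1] by simp
      have "S s z \<le> (t / s) powr (- lam) * S t x"
      proof (rule Scmp[OF _ s1 t1])
        fix \<tau> :: real assume \<tau>: "\<tau> \<ge> 1"
        show "W1 s z \<tau> \<le> (t / s) powr (- lam) * W1 t x \<tau>"
          unfolding W1_def z1 using W10[OF t1 \<tau>, of x] Nf(2) by (simp add: W1_def)
        show "W2 s z \<tau> \<le> (t / s) powr (- lam) * W2 t x \<tau>"
          unfolding W2_def z2 z3[OF \<tau>] by (rule Wc, rule phA') (use \<tau> s1 st in auto)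
      qed simp
      then show ?thesis unfolding z_def Q_def by (simp add: matrix_vector_mul_assoc)
    qed
    show "S t (T t s *v x) \<le> 1 * (t / s) powr a * S s x"
    proof -
      define y where "y = T t s *v x"
      have y1: "T \<tau> t *v (P t *v y) = T \<tau> s *v (P s *v x)" if "\<tau> \<ge> 1" for \<tau>
        unfolding y_def using Pc[OF t1 s1] coc[OF that t1 s1] by simp
      have y2: "T \<tau> t *v (Q t *v y) = T \<tau> s *v (Q s *v x)" if "\<tau> \<ge> 1" for \<tau>
        unfolding y_def using Qc[OF t1 s1] coc[OF that t1 s1] by simp
      have "S t y \<le> (t / s) powr a * S s x"
      proof (rule Scmp[OF _ t1 s1])
        fix \<tau> :: real assume \<tau>: "\<tau> \<ge> 1"
        show "W1 t y \<tau> \<le> (t / s) powr a * W1 s x \<tau>"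
          unfolding W1_def y1[OF \<tau>] by (rule Wc, rule phB') (use \<tau> s1 st in auto)
        show "W2 t y \<tau> \<le> (t / s) powr a * W2 s x \<tau>"
          unfolding W2_def y2[OF \<tau>] by (rule Wc, rule phC') (use \<tau> s1 st in auto)
      qed simp
      then show ?thesis unfolding y_def by simp
    qed
    show "S s (T s t *v x) \<le> 1 * (t / s) powr a * S t x"
    proof -
      define z where "z = T s t *v x"
      have z1: "T \<tau> s *v (P s *v z) = T \<tau> t *v (P t *v x)" if "\<tau> \<ge> 1" for \<tau>
        unfolding z_def using Pc[OF s1 t1] coc[OF that s1 t1] by simp
      have z2: "T \<tau> s *v (Q s *v z) = T \<tau> t *v (Q t *v x)" if "\<tau> \<ge> 1" for \<tau>
        unfolding z_def using Qc[OF s1 t1] coc[OF that s1 t1] by simp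
      have "S s z \<le> (t / s) powr a * S t x"
      proof (rule Scmp[OF _ s1 t1])
        fix \<tau> :: real assume \<tau>: "\<tau> \<ge> 1"
        show "W1 s z \<tau> \<le> (t / s) powr a * W1 t x \<tau>"
          unfolding W1_def z1[OF \<tau>] by (rule Wc, rule phC') (use \<tau> s1 st in auto)
        show "W2 s z \<tau> \<le> (t / s) powr a * W2 t x \<tau>"
          unfolding W2_def z2[OF \<tau>] by (rule Wc, rule phB') (use \<tau> s1 st in auto)
      qed simp
      then show ?thesis unfolding z_def by simp
    qed
  qed
  show ?thesis
  proof (rule exI[of _ S], intro conjI)
    show "\<forall>t\<ge>1. is_norm (S t)" using Snorm by blast
    show "strong_poly_dichotomy_wrt S T" by (rule dich)
    show "\<exists>C \<delta>. C > 0 \<and> \<delta> \<ge> 0 \<and> (\<forall>t x. t \<ge> 1 \<longrightarrow> N x \<le> S t x \<and> S t x \<le> C * t powr \<delta> * N x)"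
    proof (rule exI[of _ "2 * C1"], rule exI[of _ "2 * \<epsilon>"], intro conjI allI impI)
      show "2 * C1 > 0" unfolding C1_def using K by (simp add: add_pos_nonneg)
      show "2 * \<epsilon> \<ge> 0" using K by simp
      fix t x assume "(t::real) \<ge> 1"
      then show "N x \<le> S t x" "S t x \<le> 2 * C1 * t powr (2 * \<epsilon>) * N x" using Slow Sup_bd by auto
    qed
  qed
qed


theorem proposition5p1:
  fixes A :: "real \<Rightarrow> real ^ 'd ^ 'd"
    and T :: "real \<Rightarrow> real \<Rightarrow> real ^ 'd ^ 'd"
    and N :: "real ^ 'd \<Rightarrow> real"
  assumes "continuous_on {1..} A"
    and "evolution_family A T"
    and "is_norm N"
  shows "nonuniform_strong_poly_dichotomy N T \<longleftrightarrow>
    (\<exists>S :: real \<Rightarrow> real ^ 'd \<Rightarrow> real.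
        (\<forall>t\<ge>1. is_norm (S t)) \<and> strong_poly_dichotomy_wrt S T \<and>
        (\<exists>C \<delta>. C > 0 \<and> \<delta> \<ge> 0 \<and>
           (\<forall>t x. t \<ge> 1 \<longrightarrow> N x \<le> S t x \<and> S t x \<le> C * t powr \<delta> * N x)))"
proof
  assume "nonuniform_strong_poly_dichotomy N T"
  then show "\<exists>S :: real \<Rightarrow> real ^ 'd \<Rightarrow> real.
        (\<forall>t\<ge>1. is_norm (S t)) \<and> strong_poly_dichotomy_wrt S T \<and>
        (\<exists>C \<delta>. C > 0 \<and> \<delta> \<ge> 0 \<and>
           (\<forall>t x. t \<ge> 1 \<longrightarrow> N x \<le> S t x \<and> S t x \<le> C * t powr \<delta> * N x))"
    by (rule dir12[OF assms])
next
  assume "\<exists>S :: real \<Rightarrow> real ^ 'd \<Rightarrow> real.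
        (\<forall>t\<ge>1. is_norm (S t)) \<and> strong_poly_dichotomy_wrt S T \<and>
        (\<exists>C \<delta>. C > 0 \<and> \<delta> \<ge> 0 \<and>
           (\<forall>t x. t \<ge> 1 \<longrightarrow> N x \<le> S t x \<and> S t x \<le> C * t powr \<delta> * N x))"
  then obtain S :: "real \<Rightarrow> real ^ 'd \<Rightarrow> real" and C \<delta> where
    "strong_poly_dichotomy_wrt S T" "C > 0" "\<delta> \<ge> 0"
    "\<And>t x. t \<ge> 1 \<Longrightarrow> N x \<le> S t x \<and> S t x \<le> C * t powr \<delta> * N x"
    by blast
  then show "nonuniform_strong_poly_dichotomy N T"
    by (intro dir21[OF assms(3)]) auto
qed

end
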